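(* Let $p \in (0,1)$. Define a sequence $\{X_i\}_{i\ge1}$ of $\{0,1\}$-valued random variables as follows: $X_1 = 1$ with probability one, and for each $n = 1,2,\dots$, let $U_n$ be uniformly distributed on $\{1,\dots,n\}$ (chosen independently of everything else) and set $X_{n+1} = X_{U_n}$ with probability $p$ and $X_{n+1} = 0$ with probability $1-p$ (all choices made independently). Let $H_n := \sum_{i=1}^n X_i$. For $k = 1,2,\dots$ and $n = 1,2,\dots$ let $$a_n^{(k)} := \frac{\Gamma(n+kp)}{\Gamma(n)\Gamma(1+kp)}.$$ Then for every $k = 1,2,\dots$ and every $n = 1,2,\dots$, $$E[(H_n)_k] = k! \sum_{i=1}^k (-1)^{k-i}\binom{k-1}{i-1} a_n^{(i)},$$ where $(x)_k := x(x-1)\cdots(x-k+1)$ denotes the falling factorial (with $(x)_1 = x$).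
   Context: This is the "laziest" minimal random walk model of elephant type (parameter $q=0$, initial step $X_1=1$). Equivalently, the conditional law of $X_{n+1}$ given $X_1,\dots,X_n$ is $P(X_{n+1}=1\mid X_1,\dots,X_n) = p H_n/n$. *)

theory Defs
  imports "HOL-Probability.Probability"
begin

definition falling_fact :: "real \<Rightarrow> nat \<Rightarrow> real" where
  "falling_fact x k = (\<Prod>i<k. x - real i)"

text \<open>Joint law of the path (X_1,...,X_n), as the list [X_1,...,X_n] (list index i-1 holds X_i).
  The value for n = 0 is the empty path.\<close>
fun walk :: "real \<Rightarrow> nat \<Rightarrow> nat list pmf" where
  "walk p 0 = return_pmf []"
| "walk p (Suc 0) = return_pmf [1]"
| "walk p (Suc (Suc m)) =
     do { xs \<leftarrow> walk p (Suc m);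
          u \<leftarrow> pmf_of_set {1..Suc m};
          b \<leftarrow> bernoulli_pmf p;
          return_pmf (xs @ [if b then xs ! (u - 1) else 0]) }"

definition H :: "nat list \<Rightarrow> real" where
  "H xs = real (sum_list xs)"

definition a_coef :: "real \<Rightarrow> nat \<Rightarrow> nat \<Rightarrow> real" where
  "a_coef p k n = Gamma (real n + real k * p) / (Gamma (real n) * Gamma (1 + real k * p))"

end

theory Submission
  imports Defs
begin

definition SL :: "nat \<Rightarrow> nat list set" where
  "SL n = {xs. set xs \<subseteq> {0,1} \<and> length xs = n}"

lemma finite_SL: "finite (SL n)"
  unfolding SL_def by (rule finite_lists_length_eq) simp

lemma walk_supp: "xs \<in> set_pmf (walk p n) \<Longrightarrow> xs \<in> SL n"
proof (induction p n arbitrary: xs rule: walk.induct)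
  case (3 p m)
  then show ?case
  proof -
    from 3(2) obtain ys u b where ys: "ys \<in> set_pmf (walk p (Suc m))" and u: "u \<in> {1..Suc m}"
      and xs: "xs = ys @ [if b then ys ! (u - 1) else 0]"
      by auto
    have "ys \<in> SL (Suc m)" using 3(1) ys by blast
    then have l: "length ys = Suc m" and s: "set ys \<subseteq> {0,1}" by (auto simp: SL_def)
    have "u - 1 < length ys" using u l by auto
    then have "ys ! (u - 1) \<in> {0,1}" using s nth_mem by blast
    then show ?thesis using xs l s by (auto simp: SL_def)
  qed
qed (auto simp: SL_def)

lemma E_finite: "measure_pmf.expectation (walk p n) f = (\<Sum>xs\<in>SL n. pmf (walk p n) xs * f xs)"
  by (subst integral_measure_pmf[OF finite_SL]) (auto dest: walk_supp)

lemma sum_aux: "(\<Sum>i\<in>I. (A + p * f i * D) / c) = (real (card I) * A + p * (\<Sum>i\<in>I. f i) * D) / (c::real)"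
  by (simp add: sum_divide_distrib[symmetric] sum.distrib sum_distrib_left sum_distrib_right mult.assoc)

lemma inner:
  fixes G :: "real \<Rightarrow> real"
  assumes p: "0 \<le> p" "p \<le> 1" and xs: "xs \<in> SL (Suc m)"
  shows "measure_pmf.expectation (pmf_of_set {1..Suc m} \<bind> (\<lambda>u. bernoulli_pmf p \<bind>
            (\<lambda>b. return_pmf (xs @ [if b then xs ! (u - 1) else 0])))) (\<lambda>ys. G (H ys))
         = G (H xs) + p * H xs / real (Suc m) * (G (H xs + 1) - G (H xs))"
proof -
  have len: "length xs = Suc m" and s01: "set xs \<subseteq> {0,1}" using xs by (auto simp: SL_def)
  have e1: "measure_pmf.expectation (bernoulli_pmf p \<bind>
            (\<lambda>b. return_pmf (xs @ [if b then xs ! (u - 1) else 0]))) (\<lambda>ys. G (H ys))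
       = p * G (H xs + real (xs ! (u - 1))) + (1 - p) * G (H xs)" for u
    by (subst pmf_expectation_bind[of UNIV]) (auto simp: UNIV_bool p H_def)
  have "measure_pmf.expectation (pmf_of_set {1..Suc m} \<bind> (\<lambda>u. bernoulli_pmf p \<bind>
            (\<lambda>b. return_pmf (xs @ [if b then xs ! (u - 1) else 0])))) (\<lambda>ys. G (H ys))
     = (\<Sum>u\<in>{1..Suc m}. (p * G (H xs + real (xs ! (u - 1))) + (1 - p) * G (H xs)) / real (Suc m))"
    by (subst pmf_expectation_bind_pmf_of_set) (auto simp: e1 divide_inverse mult.commute)
  also have "\<dots> = (\<Sum>i\<in>{0..<Suc m}. (p * G (H xs + real (xs ! i)) + (1 - p) * G (H xs)) / real (Suc m))"
    unfolding One_nat_def sum.shift_bounds_cl_Suc_ivl atLeastLessThanSuc_atLeastAtMost by simp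
  also have "\<dots> = (\<Sum>i\<in>{0..<Suc m}. (G (H xs) + p * real (xs ! i) * (G (H xs + 1) - G (H xs))) / real (Suc m))"
  proof (rule sum.cong[OF refl])
    fix i assume "i \<in> {0..<Suc m}"
    then have "i < length xs" using len by simp
    then have "xs ! i \<in> set xs" by (rule nth_mem)
    then have "xs ! i \<in> {0,1}" using s01 by blast
    then show "(p * G (H xs + real (xs ! i)) + (1 - p) * G (H xs)) / real (Suc m) =
         (G (H xs) + p * real (xs ! i) * (G (H xs + 1) - G (H xs))) / real (Suc m)"
      by (auto simp: algebra_simps)
  qed
  also have "\<dots> = (real (Suc m) * G (H xs) + p * (\<Sum>i\<in>{0..<Suc m}. real (xs ! i)) * (G (H xs + 1) - G (H xs))) / real (Suc m)"
    by (subst sum_aux) simp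
  also have "(\<Sum>i\<in>{0..<Suc m}. real (xs ! i)) = H xs"
    unfolding H_def sum_list_sum_nth len by simp
  finally show ?thesis by (simp add: field_simps)
qed


lemma ff_Suc: "falling_fact h (Suc j) = falling_fact h j * (h - real j)"
  unfolding falling_fact_def by simp

lemma ff_shift: "falling_fact (h + 1) (Suc j) = (h + 1) * falling_fact h j"
  unfolding falling_fact_def prod.lessThan_Suc_shift by (simp add: algebra_simps)

lemma ff_diff: "falling_fact (h + 1) (Suc j) - falling_fact h (Suc j) = real (Suc j) * falling_fact h j"
  unfolding ff_shift unfolding ff_Suc by (simp add: algebra_simps)

lemma ff_mult: "h * falling_fact h j = falling_fact h (Suc j) + real j * falling_fact h j"
  unfolding ff_Suc by (simp add: algebra_simps)

lemma inner_ff: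
  assumes "1 \<le> k"
  shows "falling_fact h k + p * h / real n * (falling_fact (h + 1) k - falling_fact h k)
     = (1 + real k * p / real n) * falling_fact h k + real k * (real k - 1) * p / real n * falling_fact h (k - 1)"
proof -
  obtain j where k: "k = Suc j" using assms by (cases k) auto
  have "falling_fact h k + p * h / real n * (falling_fact (h + 1) k - falling_fact h k)
      = falling_fact h k + p / real n * real k * (h * falling_fact h j)"
    unfolding k ff_diff by (simp add: divide_inverse algebra_simps)
  also have "\<dots> = falling_fact h k + p / real n * real k * (falling_fact h k + real j * falling_fact h j)"
    unfolding ff_mult k ..
  finally show ?thesis by (simp add: k algebra_simps add_divide_distrib)
qed

lemma E_rec:
  assumes p: "0 \<le> p" "p \<le> 1" and k: "1 \<le> k"
  shows "measure_pmf.expectation (walk p (Suc (Suc m))) (\<lambda>xs. falling_fact (H xs) k)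
    = (1 + real k * p / real (Suc m)) * measure_pmf.expectation (walk p (Suc m)) (\<lambda>xs. falling_fact (H xs) k)
      + real k * (real k - 1) * p / real (Suc m) * measure_pmf.expectation (walk p (Suc m)) (\<lambda>xs. falling_fact (H xs) (k - 1))"
proof -
  have "measure_pmf.expectation (walk p (Suc (Suc m))) (\<lambda>xs. falling_fact (H xs) k)
     = (\<Sum>xs\<in>SL (Suc m). pmf (walk p (Suc m)) xs * (falling_fact (H xs) k + p * H xs / real (Suc m) * (falling_fact (H xs + 1) k - falling_fact (H xs) k)))"
    unfolding walk.simps(3)
    apply (subst pmf_expectation_bind[of "SL (Suc m)"])
    using finite_SL walk_supp inner[OF p, where G = "\<lambda>h. falling_fact h k"] by auto
  also have "\<dots> = (\<Sum>xs\<in>SL (Suc m). pmf (walk p (Suc m)) xs * ((1 + real k * p / real (Suc m)) * falling_fact (H xs) k + real k * (real k - 1) * p / real (Suc m) * falling_fact (H xs) (k - 1)))"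
    by (rule sum.cong[OF refl]) (simp only: inner_ff[OF k])
  also have "\<dots> = (1 + real k * p / real (Suc m)) * (\<Sum>xs\<in>SL (Suc m). pmf (walk p (Suc m)) xs * falling_fact (H xs) k)
      + real k * (real k - 1) * p / real (Suc m) * (\<Sum>xs\<in>SL (Suc m). pmf (walk p (Suc m)) xs * falling_fact (H xs) (k - 1))"
    by (simp add: sum_distrib_left sum.distrib algebra_simps)
  finally show ?thesis by (simp only: E_finite)
qed


lemma a_rec:
  assumes p: "0 < p" and n: "1 \<le> n"
  shows "a_coef p i (Suc n) = (1 + real i * p / real n) * a_coef p i n"
proof -
  have pos: "real n + real i * p > 0" using p n by (simp add: add_pos_nonneg)
  have g1: "Gamma (real n + real i * p + 1) = (real n + real i * p) * Gamma (real n + real i * p)"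
    by (rule Gamma_plus1) (use pos nonpos_Ints_nonpos in force)
  have g2: "Gamma (real n + 1) = real n * Gamma (real n)"
    by (rule Gamma_plus1) (use n nonpos_Ints_nonpos in force)
  have "0 \<le> real i * p" using p by simp
  then have "1 + real i * p > 0" by linarith
  then have "Gamma (real n) > 0" "Gamma (1 + real i * p) > 0" using n by auto
  then show ?thesis
    unfolding a_coef_def using g1 g2 n
    by (simp add: add.commute add.left_commute field_simps)
qed

lemma a_one:
  assumes p: "0 < p"
  shows "a_coef p i 1 = 1"
proof -
  have "0 \<le> real i * p" using p by simp
  then have "1 + real i * p > 0" by linarith
  then have "Gamma (1 + real i * p) > 0" by auto
  then show ?thesis unfolding a_coef_def by (simp add: add.commute)
qed

definition g :: "real \<Rightarrow> nat \<Rightarrow> nat \<Rightarrow> real" where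
  "g p k n = fact k * (\<Sum>j\<le>k-1. (-1) ^ (k - 1 - j) * real ((k - 1) choose j) * a_coef p (Suc j) n)"

lemma g_eq:
  assumes "1 \<le> k"
  shows "fact k * (\<Sum>i=1..k. (-1) ^ (k - i) * real ((k - 1) choose (i - 1)) * a_coef p i n) = g p k n"
proof -
  obtain j where k: "k = Suc j" using assms by (cases k) auto
  show ?thesis unfolding g_def k One_nat_def sum.shift_bounds_cl_Suc_ivl atMost_atLeast0 by simp
qed

lemma g_one:
  assumes p: "0 < p" and "1 \<le> k"
  shows "g p k 1 = (if k = 1 then 1 else 0)"
proof -
  obtain j where k: "k = Suc j" using assms by (cases k) auto
  have "(\<Sum>i\<le>j. (-1) ^ (j - i) * real (j choose i)) = ((1::real) + (-1)) ^ j"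
    unfolding binomial_ring by (simp add: mult.commute)
  then show ?thesis unfolding g_def k using a_one[OF p] by simp
qed

lemma gen: "(y - x) * C = y * C' \<Longrightarrow> (- s) * C * ((x - y) * B) = y * (s * C' * (B::real))"
proof -
  assume a: "(y - x) * C = y * C'"
  have "(- s) * C * ((x - y) * B) = s * B * ((y - x) * C)" by (simp add: algebra_simps)
  then show ?thesis using a by simp
qed

lemma key:
  "(\<Sum>j\<le>Suc m. (-1) ^ (Suc m - j) * real (Suc m choose j) * ((real j - real (Suc m)) * B j))
    = real (Suc m) * (\<Sum>j\<le>m. (-1) ^ (m - j) * real (m choose j) * B j)"
proof -
  have "(\<Sum>j\<le>Suc m. (-1) ^ (Suc m - j) * real (Suc m choose j) * ((real j - real (Suc m)) * B j))
     = (\<Sum>j\<le>m. (-1) ^ (Suc m - j) * real (Suc m choose j) * ((real j - real (Suc m)) * B j))"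
    by simp
  also have "\<dots> = (\<Sum>j\<le>m. real (Suc m) * ((-1) ^ (m - j) * real (m choose j) * B j))"
  proof (rule sum.cong[OF refl])
    fix j assume "j \<in> {..m}"
    then have j: "j \<le> m" by simp
    have e1: "(-1::real) ^ (Suc m - j) = - ((-1) ^ (m - j))" using j by (simp add: Suc_diff_le)
    have h: "real (Suc m - j) * real (Suc m choose j) = real (Suc m) * real (m choose j)"
      by (metis binomial_absorb_comp diff_Suc_1 of_nat_mult)
    have d: "real (Suc m - j) = real (Suc m) - real j" using j by (simp add: of_nat_diff)
    have e2: "(real (Suc m) - real j) * real (Suc m choose j) = real (Suc m) * real (m choose j)"
      using h d by metis
    show "(-1) ^ (Suc m - j) * real (Suc m choose j) * ((real j - real (Suc m)) * B j)
        = real (Suc m) * ((-1) ^ (m - j) * real (m choose j) * B j)"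
      unfolding e1 by (rule gen[OF e2])
  qed
  finally show ?thesis by (simp add: sum_distrib_left)
qed

lemma g_rec:
  assumes p: "0 < p" and n: "1 \<le> n" and k: "1 \<le> k"
  shows "g p k (Suc n) = (1 + real k * p / real n) * g p k n + real k * (real k - 1) * p / real n * g p (k - 1) n"
proof -
  obtain k' where kk: "k = Suc k'" using k by (cases k) auto
  define c where "c = p / real n"
  define A where "A j = a_coef p (Suc j) n" for j
  have "g p k (Suc n) = fact k * (\<Sum>j\<le>k'. (-1) ^ (k' - j) * real (k' choose j) * ((1 + real (Suc j) * c) * A j))"
    unfolding g_def kk A_def c_def using a_rec[OF p n] by (simp add: algebra_simps)
  also have "\<dots> = fact k * (\<Sum>j\<le>k'. (1 + real k * c) * ((-1) ^ (k' - j) * real (k' choose j) * A j)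
       + c * ((-1) ^ (k' - j) * real (k' choose j) * ((real j - real k') * A j)))"
    by (rule arg_cong[where f = "\<lambda>x. fact k * x"], rule sum.cong[OF refl]) (simp add: kk algebra_simps)
  also have "\<dots> = (1 + real k * c) * g p k n + fact k * c * (\<Sum>j\<le>k'. (-1) ^ (k' - j) * real (k' choose j) * ((real j - real k') * A j))"
    unfolding sum.distrib g_def kk A_def by (simp add: sum_distrib_left algebra_simps)
  also have "fact k * c * (\<Sum>j\<le>k'. (-1) ^ (k' - j) * real (k' choose j) * ((real j - real k') * A j))
      = real k * (real k - 1) * c * g p (k - 1) n"
  proof (cases k')
    case 0
    then show ?thesis by (simp add: kk)
  next
    case (Suc m)
    show ?thesis unfolding Suc key unfolding g_def kk Suc A_def
      by (simp add: algebra_simps)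
  qed
  finally show ?thesis by (simp add: c_def)
qed


lemma main:
  assumes p: "0 < p" "p < 1" and n: "1 \<le> n"
  shows "\<forall>k\<ge>1. measure_pmf.expectation (walk p n) (\<lambda>xs. falling_fact (H xs) k) = g p k n"
  using n
proof (induction n rule: dec_induct)
  case base
  show ?case
  proof (intro allI impI)
    fix k :: nat assume k: "1 \<le> k"
    have "falling_fact 1 k = (if k = 1 then 1 else 0)"
    proof (cases "k = 1")
      case False
      then have "1 \<in> {..<k}" using k by auto
      then show ?thesis unfolding falling_fact_def using False
        by (subst prod_zero) (auto intro!: bexI[of _ 1])
    qed (simp add: falling_fact_def)
    then show "measure_pmf.expectation (walk p 1) (\<lambda>xs. falling_fact (H xs) k) = g p k 1"
      using g_one[OF p(1) k] by (simp add: H_def)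
  qed
next
  case (step m)
  obtain m' where m: "m = Suc m'" using step(1) by (cases m) auto
  show ?case
  proof (intro allI impI)
    fix k :: nat assume k: "1 \<le> k"
    have r: "real k * (real k - 1) * p / real m * measure_pmf.expectation (walk p m) (\<lambda>xs. falling_fact (H xs) (k - 1))
        = real k * (real k - 1) * p / real m * g p (k - 1) m"
    proof (cases "k = 1")
      case False
      then show ?thesis using step(3) k by auto
    qed simp
    show "measure_pmf.expectation (walk p (Suc m)) (\<lambda>xs. falling_fact (H xs) k) = g p k (Suc m)"
      using E_rec[of p k m'] p k r step(3) g_rec[OF p(1) step(1) k] m by simp
  qed
qed

theorem theorem2p1:
  fixes p :: real and k n :: nat
  assumes "0 < p" "p < 1" "1 \<le> k" "1 \<le> n"
  shows "measure_pmf.expectation (walk p n) (\<lambda>xs. falling_fact (H xs) k)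
         = fact k * (\<Sum>i=1..k. (-1) ^ (k - i) * real ((k - 1) choose (i - 1)) * a_coef p i n)"
  using main[OF assms(1,2,4)] g_eq[OF assms(3)] assms(3) by simp

end
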